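(* Let $a,c,d$ be generic parameters. Define $\alpha_0^*=\beta_0^*=\alpha_0^\dagger=\beta_0^\dagger=1$ and, for $n\ge1$, \begin{align*} \alpha_n^*&=\frac{(aq,c,d;q)_n}{(aq^2/c,aq^2/d,q;q)_n}\Big(\frac{-aq}{cd}\Big)^n q^{(n^2+n)/2}- aq^{2n-1}\frac{(aq,c,d;q)_{n-1}}{(aq^2/c,aq^2/d,q;q)_{n-1}}\Big(\frac{-aq}{cd}\Big)^{n-1} q^{(n^2-n)/2},\\ \beta_n^*&=\frac{(aq^2/cd;q)_n}{(aq^2/c,aq^2/d,q;q)_n},\\ \alpha_n^{\dagger}&=q^n\frac{(aq,c,d;q)_n}{(aq^2/c,aq^2/d,q;q)_n}\Big(\frac{-aq}{cd}\Big)^n q^{(n^2+n)/2}- q^{n-1}\frac{(aq,c,d;q)_{n-1}}{(aq^2/c,aq^2/d,q;q)_{n-1}}\Big(\frac{-aq}{cd}\Big)^{n-1} q^{(n^2-n)/2},\\ \beta_n^{\dagger}&=q^n\frac{(aq^2/cd;q)_n}{(aq^2/c,aq^2/d,q;q)_n}. \end{align*} Then $(\alpha_n^*,\beta_n^* )$ and $(\alpha_n^\dagger,\beta_n^\dagger)$ are Bailey pairs relative to $a$.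
   Context: Notation: $(x;q)_n=\prod_{i=0}^{n-1}(1-xq^i)$, $(x_1,\dots,x_j;q)_n=(x_1;q)_n\cdots(x_j;q)_n$. A pair of sequences $(\alpha_n,\beta_n)_{n\ge0}$ is a Bailey pair relative to $a$ if $\alpha_0=1$ and for all $n\ge0$, $\beta_n=\sum_{r=0}^n\frac{\alpha_r}{(q;q)_{n-r}(aq;q)_{n+r}}$. *)

theory Defs
  imports Complex_Main
begin

definition qpoch :: "complex \<Rightarrow> complex \<Rightarrow> nat \<Rightarrow> complex" where
  "qpoch x q n = (\<Prod>i<n. 1 - x * q ^ i)"

definition bailey_pair :: "complex \<Rightarrow> complex \<Rightarrow> (nat \<Rightarrow> complex) \<Rightarrow> (nat \<Rightarrow> complex) \<Rightarrow> bool" where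
  "bailey_pair a q \<alpha> \<beta> \<longleftrightarrow> \<alpha> 0 = 1 \<and>
     (\<forall>n. \<beta> n = (\<Sum>r\<le>n. \<alpha> r / (qpoch q q (n - r) * qpoch (a * q) q (n + r))))"

definition T_term :: "complex \<Rightarrow> complex \<Rightarrow> complex \<Rightarrow> complex \<Rightarrow> nat \<Rightarrow> complex" where
  "T_term a c d q n =
     qpoch (a*q) q n * qpoch c q n * qpoch d q n
     / (qpoch (a*q^2/c) q n * qpoch (a*q^2/d) q n * qpoch q q n)
     * (- a * q / (c * d)) ^ n * q ^ ((n^2 + n) div 2)"

definition alpha_star :: "complex \<Rightarrow> complex \<Rightarrow> complex \<Rightarrow> complex \<Rightarrow> nat \<Rightarrow> complex" where
  "alpha_star a c d q n = (if n = 0 then 1 else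
     T_term a c d q n - a * q ^ (2*n - 1) * T_term a c d q (n - 1))"

definition beta_star :: "complex \<Rightarrow> complex \<Rightarrow> complex \<Rightarrow> complex \<Rightarrow> nat \<Rightarrow> complex" where
  "beta_star a c d q n = (if n = 0 then 1 else
     qpoch (a*q^2/(c*d)) q n / (qpoch (a*q^2/c) q n * qpoch (a*q^2/d) q n * qpoch q q n))"

definition alpha_dagger :: "complex \<Rightarrow> complex \<Rightarrow> complex \<Rightarrow> complex \<Rightarrow> nat \<Rightarrow> complex" where
  "alpha_dagger a c d q n = (if n = 0 then 1 else
     q ^ n * T_term a c d q n - q ^ (n - 1) * T_term a c d q (n - 1))"

definition beta_dagger :: "complex \<Rightarrow> complex \<Rightarrow> complex \<Rightarrow> complex \<Rightarrow> nat \<Rightarrow> complex" where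
  "beta_dagger a c d q n = (if n = 0 then 1 else
     q ^ n * qpoch (a*q^2/(c*d)) q n / (qpoch (a*q^2/c) q n * qpoch (a*q^2/d) q n * qpoch q q n))"

end

theory Submission
  imports Defs
begin

lemma qpoch_Suc: "qpoch x q (Suc n) = qpoch x q n * (1 - x*q^n)"
  by (simp add: qpoch_def)
lemma qpoch_0[simp]: "qpoch x q 0 = 1"
  by (simp add: qpoch_def)
lemma qpoch_fac_nz: "(\<And>n. qpoch x q n \<noteq> 0) \<Longrightarrow> 1 - x*q^n \<noteq> 0"
  by (metis mult_zero_right qpoch_Suc)
lemma T0: "T_term a c d q 0 = 1" by (simp add: T_term_def)
lemma T_Suc: "T_term a c d q (Suc k) = T_term a c d q k *
   ((1-a*q*q^k)*(1-c*q^k)*(1-d*q^k)/((1-a*q^2/c*q^k)*(1-a*q^2/d*q^k)*(1-q*q^k)) * (-a*q/(c*d)) * q^(Suc k))"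
proof -
  have e: "(Suc k^2 + Suc k) div 2 = (k^2+k) div 2 + Suc k"
  proof -
    have "Suc k^2 + Suc k = (k^2+k) + 2*Suc k" by (simp add: power2_eq_square)
    then show ?thesis by simp
  qed
  show ?thesis unfolding T_term_def qpoch_Suc e power_add
    by (simp add: divide_inverse inverse_mult_distrib mult_ac)
qed
lemma R_eq:
  fixes a c d q y :: complex
  assumes "c \<noteq> 0" "d \<noteq> 0" "1-a*q^2/c*y \<noteq> 0" "1-a*q^2/d*y \<noteq> 0" "1 - q*y \<noteq> 0"
  shows "(1-a*q*y)*(1-c*y)*(1-d*y)/((1-a*q^2/c*y)*(1-a*q^2/d*y)*(1-q*y)) * (-a*q/(c*d)) * (q*y)
   = ((1-a*q*y)*(1-c*y)*(1-d*y)) * (-(a*q)*(q*y)/((c-(a*q)*(q*y))*(d-(a*q)*(q*y))*(1-q*y)))"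
proof -
  obtain D3 D4 D5 M where e3: "D3 = c-(a*q)*(q*y)" and e4: "D4 = d-(a*q)*(q*y)" and e5: "D5 = 1-q*y"
    and eM: "M = (1-a*q*y)*(1-c*y)*(1-d*y)" by blast
  have f3: "1-a*q^2/c*y = D3/c" using assms(1) unfolding e3 by (simp add: field_simps power2_eq_square)
  have f4: "1-a*q^2/d*y = D4/d" using assms(2) unfolding e4 by (simp add: field_simps power2_eq_square)
  have n3: "D3 \<noteq> 0" using assms(3) f3 by auto
  have n4: "D4 \<noteq> 0" using assms(4) f4 by auto
  have n5: "D5 \<noteq> 0" using assms(5) e5 by auto
  have "M/((D3/c)*(D4/d)*D5) * (-a*q/(c*d)) * (q*y) = M * (-(a*q)*(q*y)/(D3*D4*D5))"
    using n3 n4 n5 assms(1,2) by (simp add: field_simps)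
  then show ?thesis unfolding f3 f4 e3[symmetric] e4[symmetric] e5[symmetric] eM[symmetric] .
qed
lemma inner_alg:
  fixes A c d s t D1 D2 D3 D4 D5 :: complex
  assumes "c \<noteq> 0" "d \<noteq> 0" "D1 \<noteq> 0" "D2 \<noteq> 0" "D3 \<noteq> 0" "D4 \<noteq> 0" "D5 \<noteq> 0"
   and e1: "D1 = 1 - s" and e2: "D2 = 1 - A*s*t^2" and e3: "D3 = c - A*t"
   and e4: "D4 = d - A*t" and e5: "D5 = 1 - t"
  shows "(-A*t/(D3*D4*D5)) * (1-A*t^2) * (-(1 - A*s*t/(c*d)) + (1 - A*s*t/c)*(1 - A*s*t/d)*(1 - s*t)/(D1*D2))
     = (A*s*t/(c*d)) * ((-A*t/(D3*D4*D5))*(1-A*t)*(1-c*t)*(1-d*t)/D2 - 1/D1)"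
proof -
  have poly2: "(1-A*t^2)*(-(c*d - A*s*t)*(1-s)*(1-A*s*t^2) + (c-A*s*t)*(d-A*s*t)*(1-s*t))
     = s*(A*t*(1-A*t)*(1-c*t)*(1-d*t)*(1-s) + (c-A*t)*(d-A*t)*(1-t)*(1-A*s*t^2))"
    by (simp add: algebra_simps power2_eq_square)
  have "(-A*t/(D3*D4*D5)) * (1-A*t^2) * (-(1 - A*s*t/(c*d)) + (1 - A*s*t/c)*(1 - A*s*t/d)*(1 - s*t)/(D1*D2))
     = (-A*t/(D3*D4*D5*c*d*D1*D2)) * ((1-A*t^2)*(-(c*d - A*s*t)*D1*D2 + (c-A*s*t)*(d-A*s*t)*(1-s*t)))"
    using assms(1-7) by (simp add: field_simps)
  also have "\<dots> = (-A*t/(D3*D4*D5*c*d*D1*D2)) * (s*(A*t*(1-A*t)*(1-c*t)*(1-d*t)*D1 + D3*D4*D5*D2))"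
    unfolding e1 e2 e3 e4 e5 using poly2 by simp
  also have "\<dots> = (A*s*t/(c*d)) * ((-A*t/(D3*D4*D5))*(1-A*t)*(1-c*t)*(1-d*t)/D2 - 1/D1)"
    using assms(1-7) by (simp add: field_simps)
  finally show ?thesis .
qed

lemma step_abs:
  fixes A c d s t Tk M0 Q P D1 D2 D3 D4 D5 :: complex
  assumes "c \<noteq> 0" "d \<noteq> 0" "Q \<noteq> 0" "P \<noteq> 0" "D1 \<noteq> 0" "D2 \<noteq> 0" "D3 \<noteq> 0" "D4 \<noteq> 0" "D5 \<noteq> 0"
   and e1: "D1 = 1 - s" and e2: "D2 = 1 - A*s*t^2" and e3: "D3 = c - A*t"
   and e4: "D4 = d - A*t" and e5: "D5 = 1 - t"
  shows "(-(1 - A*s*t/(c*d))) * (Tk*(M0*(-A*t/(D3*D4*D5))) * (1-A*t^2) / (Q*P))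
   + ((1 - A*s*t/c)*(1 - A*s*t/d)*(1-s*t)) * (Tk*(M0*(-A*t/(D3*D4*D5))) * (1-A*t^2) / ((Q*D1)*(P*D2)))
   = (A*s*t/(c*d)) * (Tk*(M0*(-A*t/(D3*D4*D5)))) * ((1-A*t)*(1-c*t)*(1-d*t)) / (Q*(P*D2))
     - (A*s*t/(c*d)) * Tk * M0 / ((Q*D1)*P)"
proof -
  note I = inner_alg[OF assms(1,2,5-9) e1 e2 e3 e4 e5]
  have "LHS_form": "(-(1 - A*s*t/(c*d))) * (Tk*(M0*(-A*t/(D3*D4*D5))) * (1-A*t^2) / (Q*P))
   + ((1 - A*s*t/c)*(1 - A*s*t/d)*(1-s*t)) * (Tk*(M0*(-A*t/(D3*D4*D5))) * (1-A*t^2) / ((Q*D1)*(P*D2)))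
   = (Tk*M0/(Q*P)) * ((-A*t/(D3*D4*D5)) * (1-A*t^2) * (-(1 - A*s*t/(c*d)) + (1 - A*s*t/c)*(1 - A*s*t/d)*(1 - s*t)/(D1*D2)))"
    using assms(3-6) by (simp add: divide_simps algebra_simps)
  have "RHS_form": "(A*s*t/(c*d)) * (Tk*(M0*(-A*t/(D3*D4*D5)))) * ((1-A*t)*(1-c*t)*(1-d*t)) / (Q*(P*D2))
     - (A*s*t/(c*d)) * Tk * M0 / ((Q*D1)*P)
   = (Tk*M0/(Q*P)) * ((A*s*t/(c*d)) * ((-A*t/(D3*D4*D5))*(1-A*t)*(1-c*t)*(1-d*t)/D2 - 1/D1))"
    using assms(3-6) by (simp add: divide_simps algebra_simps)
  show ?thesis unfolding LHS_form RHS_form I ..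
qed

lemma zero_abs:
  fixes A c d s Q P D1 D2 :: complex
  assumes "c \<noteq> 0" "d \<noteq> 0" "Q \<noteq> 0" "P \<noteq> 0" "D1 \<noteq> 0" "D2 \<noteq> 0"
   and e1: "D1 = 1 - s" and e2: "D2 = 1 - A*s"
  shows "(-(1 - A*s/(c*d))) * ((1-A)/(Q*P)) + ((1-A*s/c)*(1-A*s/d)*(1-s)) * ((1-A)/((Q*D1)*(P*D2)))
     = (A*s/(c*d)) * ((1-A)*(1-c)*(1-d)) / (Q*(P*D2))"
proof -
  have "(-(1 - A*s/(c*d))) * ((1-A)/(Q*P)) + ((1-A*s/c)*(1-A*s/d)*(1-s)) * ((1-A)/((Q*D1)*(P*D2)))
     = (1-A)*(-(c*d - A*s)*D1*D2 + (c-A*s)*(d-A*s)*(1-s))/(c*d*Q*P*D1*D2)"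
    using assms(1-6) by (simp add: field_simps)
  also have "\<dots> = (1-A)*(A*s*(1-c)*(1-d)*D1)/(c*d*Q*P*D1*D2)"
    unfolding e1 e2 by (simp add: algebra_simps)
  also have "\<dots> = (A*s/(c*d)) * ((1-A)*(1-c)*(1-d)) / (Q*(P*D2))"
    using assms(1-6) by (simp add: field_simps)
  finally show ?thesis .
qed

lemma last_abs:
  fixes A c d t Tn M0 Q P D2 D3 D4 D5 :: complex
  assumes "c \<noteq> 0" "d \<noteq> 0" "Q \<noteq> 0" "P \<noteq> 0" "D2 \<noteq> 0" "D3 \<noteq> 0" "D4 \<noteq> 0" "D5 \<noteq> 0"
   and e2: "D2 = 1 - A*t^2" and e3: "D3 = c - A*t" and e4: "D4 = d - A*t" and e5: "D5 = 1 - t"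
  shows "((1-A*t/c)*(1-A*t/d)*(1-t)) * (Tn*(M0*(-A*t/(D3*D4*D5))) * (1-A*t^2) / (Q*(P*D2)))
     = - ((A*t/(c*d)) * Tn * M0 / (Q*P))"
proof -
  have a: "(1-A*t/c) = D3/c" "(1-A*t/d) = D4/d" "1-t = D5" "1-A*t^2 = D2"
    using assms(1,2) e2 e3 e4 e5 by (auto simp: field_simps)
  show ?thesis unfolding a using assms(1-8) by (simp add: field_simps)
qed

definition u_t :: "complex \<Rightarrow> complex \<Rightarrow> complex \<Rightarrow> complex \<Rightarrow> nat \<Rightarrow> nat \<Rightarrow> complex" where
  "u_t a c d q n r = T_term a c d q r * (1 - a*q^(2*r+1)) / (qpoch q q (n-r) * qpoch (a*q) q (n+r+1))"
definition H_t :: "complex \<Rightarrow> complex \<Rightarrow> complex \<Rightarrow> complex \<Rightarrow> nat \<Rightarrow> nat \<Rightarrow> complex" where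
  "H_t a c d q n r = a*q/(c*d) * q^(n+1) * T_term a c d q r * ((1-a*q*q^r)*(1-c*q^r)*(1-d*q^r))
     / (qpoch q q (n-r) * qpoch (a*q) q (n+r+2))"
definition p0_t :: "complex \<Rightarrow> complex \<Rightarrow> complex \<Rightarrow> complex \<Rightarrow> nat \<Rightarrow> complex" where
  "p0_t a c d q n = -(1 - a*q^2/(c*d)*q^n)"
definition p1_t :: "complex \<Rightarrow> complex \<Rightarrow> complex \<Rightarrow> complex \<Rightarrow> nat \<Rightarrow> complex" where
  "p1_t a c d q n = (1 - a*q^2/c*q^n)*(1 - a*q^2/d*q^n)*(1 - q*q^n)"

lemma step_conc:
  fixes a c d q :: complex
  assumes c0: "c \<noteq> 0" and d0: "d \<noteq> 0"
    and hq: "\<And>n. qpoch q q n \<noteq> 0"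
    and ha: "\<And>n. qpoch (a*q) q n \<noteq> 0"
    and hc: "\<And>n. qpoch (a*q^2/c) q n \<noteq> 0"
    and hd: "\<And>n. qpoch (a*q^2/d) q n \<noteq> 0"
    and nmk: "n = m + Suc k"
  shows "p0_t a c d q n * u_t a c d q n (Suc k) + p1_t a c d q n * u_t a c d q (Suc n) (Suc k)
       = H_t a c d q n (Suc k) - H_t a c d q n k"
proof -
  define A s t where "A = a*q" and "s = q*q^m" and "t = q*q^k"
  define Q P where "Q = qpoch q q m" and "P = qpoch (a*q) q (m+2*k+3)"
  define D1 D2 D3 D4 D5 where "D1 = 1 - s" and "D2 = 1 - A*s*t^2" and "D3 = c - A*t"
    and "D4 = d - A*t" and "D5 = 1 - t"
  define Tk M0 where "Tk = T_term a c d q k" and "M0 = (1-a*q*q^k)*(1-c*q^k)*(1-d*q^k)"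
  have nc: "1-a*q^2/c*q^k \<noteq> 0" using qpoch_fac_nz[OF hc] by blast
  have nd: "1-a*q^2/d*q^k \<noteq> 0" using qpoch_fac_nz[OF hd] by blast
  have nq: "1-q*q^k \<noteq> 0" using qpoch_fac_nz[OF hq] by blast
  have hT: "T_term a c d q (Suc k) = Tk*(M0*(-A*t/(D3*D4*D5)))"
    unfolding T_Suc power_Suc[of q k] R_eq[OF c0 d0 nc nd nq] Tk_def M0_def A_def t_def D3_def D4_def D5_def ..
  have hpow: "a*q^(2*Suc k+1) = A*t^2"
    unfolding A_def t_def by (simp add: power2_eq_square power_add power_mult algebra_simps)
  have hQ1: "qpoch q q (n - Suc k) = Q" unfolding Q_def nmk by simp
  have hQ2: "qpoch q q (Suc n - Suc k) = Q*D1" unfolding Q_def D1_def s_def nmk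
    by (simp add: qpoch_Suc)
  have hQ3: "qpoch q q (n - k) = Q*D1" unfolding Q_def D1_def s_def nmk
    by (simp add: qpoch_Suc)
  have hP1: "qpoch (a*q) q (n + Suc k + 1) = P" unfolding P_def nmk
    by (simp add: algebra_simps numeral_eq_Suc)
  have hP4: "qpoch (a*q) q (n + k + 2) = P" unfolding P_def nmk
    by (simp add: algebra_simps numeral_eq_Suc)
  have pw: "a*q*q^(m+2*k+3) = A*s*t^2" unfolding A_def s_def t_def
    by (simp add: power2_eq_square power_add mult_2 algebra_simps numeral_eq_Suc)
  have hP2: "qpoch (a*q) q (Suc n + Suc k + 1) = P*D2"
  proof -
    have "Suc n + Suc k + 1 = Suc (m+2*k+3)" unfolding nmk by simp
    then show ?thesis unfolding P_def D2_def qpoch_Suc pw by (simp only: qpoch_Suc pw)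
  qed
  have hP3: "qpoch (a*q) q (n + Suc k + 2) = P*D2"
  proof -
    have "n + Suc k + 2 = Suc (m+2*k+3)" unfolding nmk by simp
    then show ?thesis unfolding P_def D2_def qpoch_Suc pw by (simp only: qpoch_Suc pw)
  qed
  have qn: "q*q^n = s*t" unfolding s_def t_def nmk
    by (simp add: power_add algebra_simps)
  have q2: "a*q^2*q^n = A*s*t"
  proof -
    have "a*q^2*q^n = a*q*(q*q^n)" by (simp add: power2_eq_square)
    then show ?thesis unfolding qn A_def by simp
  qed
  have hp0: "p0_t a c d q n = -(1 - A*s*t/(c*d))"
    unfolding p0_t_def q2[symmetric] by simp
  have hp1: "p1_t a c d q n = (1 - A*s*t/c)*(1 - A*s*t/d)*(1 - s*t)"
    unfolding p1_t_def q2[symmetric] qn[symmetric] by simp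
  have hK: "a*q/(c*d) * q^(n+1) = A*s*t/(c*d)"
  proof -
    have "a*q/(c*d) * q^(n+1) = a*q^2*q^n/(c*d)" by (simp add: power2_eq_square)
    then show ?thesis unfolding q2 .
  qed
  have hM1: "(1-a*q*q^Suc k)*(1-c*q^Suc k)*(1-d*q^Suc k) = (1-A*t)*(1-c*t)*(1-d*t)"
    unfolding A_def t_def by simp
  have nz: "Q \<noteq> 0" "P \<noteq> 0" "D1 \<noteq> 0" "D2 \<noteq> 0" "D3 \<noteq> 0" "D4 \<noteq> 0" "D5 \<noteq> 0"
  proof -
    show "Q \<noteq> 0" unfolding Q_def by (rule hq)
    show "P \<noteq> 0" unfolding P_def by (rule ha)
    show "D1 \<noteq> 0" unfolding D1_def s_def by (rule qpoch_fac_nz[OF hq])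
    show "D2 \<noteq> 0" unfolding D2_def pw[symmetric] by (rule qpoch_fac_nz[OF ha])
    show "D5 \<noteq> 0" unfolding D5_def t_def by (rule nq)
    have "c - A*t = c * (1-a*q^2/c*q^k)" unfolding A_def t_def using c0 by (simp add: field_simps power2_eq_square)
    then show "D3 \<noteq> 0" unfolding D3_def using c0 nc by simp
    have "d - A*t = d * (1-a*q^2/d*q^k)" unfolding A_def t_def using d0 by (simp add: field_simps power2_eq_square)
    then show "D4 \<noteq> 0" unfolding D4_def using d0 nd by simp
  qed
  show ?thesis
    unfolding u_t_def H_t_def hT hpow hQ1 hQ2 hQ3 hP1 hP2 hP3 hP4 hp0 hp1 hK hM1 M0_def[symmetric] Tk_def[symmetric]
    by (rule step_abs[OF c0 d0 nz D1_def D2_def D3_def D4_def D5_def])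
qed

lemma zero_conc:
  fixes a c d q :: complex
  assumes c0: "c \<noteq> 0" and d0: "d \<noteq> 0"
    and hq: "\<And>n. qpoch q q n \<noteq> 0"
    and ha: "\<And>n. qpoch (a*q) q n \<noteq> 0"
  shows "p0_t a c d q n * u_t a c d q n 0 + p1_t a c d q n * u_t a c d q (Suc n) 0
       = H_t a c d q n 0"
proof -
  define A s where "A = a*q" and "s = q*q^n"
  define Q P where "Q = qpoch q q n" and "P = qpoch (a*q) q (n+1)"
  define D1 D2 where "D1 = 1 - s" and "D2 = 1 - A*s"
  have hpow: "a*q^(2*0+1) = A" unfolding A_def by simp
  have hQ1: "qpoch q q (n - 0) = Q" unfolding Q_def by simp
  have hQ2: "qpoch q q (Suc n - 0) = Q*D1" unfolding Q_def D1_def s_def by (simp add: qpoch_Suc)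
  have hP1: "qpoch (a*q) q (n + 0 + 1) = P" unfolding P_def by simp
  have pw: "a*q*q^(n+1) = A*s" unfolding A_def s_def by simp
  have hP2: "qpoch (a*q) q (Suc n + 0 + 1) = P*D2"
  proof -
    have "Suc n + 0 + 1 = Suc (n+1)" by simp
    then show ?thesis unfolding P_def D2_def qpoch_Suc pw by (simp only: qpoch_Suc pw)
  qed
  have hP3: "qpoch (a*q) q (n + 0 + 2) = P*D2"
  proof -
    have "n + 0 + 2 = Suc (n+1)" by simp
    then show ?thesis unfolding P_def D2_def qpoch_Suc pw by (simp only: qpoch_Suc pw)
  qed
  have q2: "a*q^2*q^n = A*s" unfolding A_def s_def by (simp add: power2_eq_square)
  have hp0: "p0_t a c d q n = -(1 - A*s/(c*d))"
    unfolding p0_t_def q2[symmetric] by simp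
  have hp1: "p1_t a c d q n = (1 - A*s/c)*(1 - A*s/d)*(1 - s)"
    unfolding p1_t_def q2[symmetric] by (simp add: s_def)
  have hK: "a*q/(c*d) * q^(n+1) = A*s/(c*d)"
  proof -
    have "a*q/(c*d) * q^(n+1) = a*q^2*q^n/(c*d)" by (simp add: power2_eq_square)
    then show ?thesis unfolding q2 .
  qed
  have hM: "(1-a*q*q^0)*(1-c*q^0)*(1-d*q^0) = (1-A)*(1-c)*(1-d)" unfolding A_def by simp
  have nz: "Q \<noteq> 0" "P \<noteq> 0" "D1 \<noteq> 0" "D2 \<noteq> 0"
  proof -
    show "Q \<noteq> 0" unfolding Q_def by (rule hq)
    show "P \<noteq> 0" unfolding P_def by (rule ha)
    show "D1 \<noteq> 0" unfolding D1_def s_def by (rule qpoch_fac_nz[OF hq])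
    show "D2 \<noteq> 0" unfolding D2_def pw[symmetric] by (rule qpoch_fac_nz[OF ha])
  qed
  show ?thesis
    unfolding u_t_def H_t_def T0 hpow hQ1 hQ2 hP1 hP2 hP3 hp0 hp1 hK hM mult_1_left mult_1_right
    by (rule zero_abs[OF c0 d0 nz D1_def D2_def])
qed

lemma last_conc:
  fixes a c d q :: complex
  assumes c0: "c \<noteq> 0" and d0: "d \<noteq> 0"
    and hq: "\<And>n. qpoch q q n \<noteq> 0"
    and ha: "\<And>n. qpoch (a*q) q n \<noteq> 0"
    and hc: "\<And>n. qpoch (a*q^2/c) q n \<noteq> 0"
    and hd: "\<And>n. qpoch (a*q^2/d) q n \<noteq> 0"
  shows "p1_t a c d q n * u_t a c d q (Suc n) (Suc n) = - H_t a c d q n n"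
proof -
  define A t where "A = a*q" and "t = q*q^n"
  define Q P where "Q = qpoch q q 0" and "P = qpoch (a*q) q (n+n+2)"
  define D2 D3 D4 D5 where "D2 = 1 - A*t^2" and "D3 = c - A*t"
    and "D4 = d - A*t" and "D5 = 1 - t"
  define Tk M0 where "Tk = T_term a c d q n" and "M0 = (1-a*q*q^n)*(1-c*q^n)*(1-d*q^n)"
  have nc: "1-a*q^2/c*q^n \<noteq> 0" using qpoch_fac_nz[OF hc] by blast
  have nd: "1-a*q^2/d*q^n \<noteq> 0" using qpoch_fac_nz[OF hd] by blast
  have nq: "1-q*q^n \<noteq> 0" using qpoch_fac_nz[OF hq] by blast
  have hT: "T_term a c d q (Suc n) = Tk*(M0*(-A*t/(D3*D4*D5)))"
    unfolding T_Suc power_Suc[of q n] R_eq[OF c0 d0 nc nd nq] Tk_def M0_def A_def t_def D3_def D4_def D5_def ..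
  have hpow: "a*q^(2*Suc n+1) = A*t^2"
    unfolding A_def t_def by (simp add: power2_eq_square power_add power_mult algebra_simps)
  have hQ2: "qpoch q q (Suc n - Suc n) = Q" unfolding Q_def by simp
  have hQ3: "qpoch q q (n - n) = Q" unfolding Q_def by simp
  have pw: "a*q*q^(n+n+2) = A*t^2" unfolding A_def t_def
    by (simp add: power2_eq_square power_add algebra_simps)
  have hP2: "qpoch (a*q) q (Suc n + Suc n + 1) = P*D2"
  proof -
    have "Suc n + Suc n + 1 = Suc (n+n+2)" by simp
    then show ?thesis unfolding P_def D2_def qpoch_Suc pw by (simp only: qpoch_Suc pw)
  qed
  have hP4: "qpoch (a*q) q (n + n + 2) = P" unfolding P_def ..
  have q2: "a*q^2*q^n = A*t" unfolding A_def t_def by (simp add: power2_eq_square)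
  have hp1: "p1_t a c d q n = (1 - A*t/c)*(1 - A*t/d)*(1 - t)"
    unfolding p1_t_def q2[symmetric] by (simp add: t_def)
  have hK: "a*q/(c*d) * q^(n+1) = A*t/(c*d)"
  proof -
    have "a*q/(c*d) * q^(n+1) = a*q^2*q^n/(c*d)" by (simp add: power2_eq_square)
    then show ?thesis unfolding q2 .
  qed
  have nz: "Q \<noteq> 0" "P \<noteq> 0" "D2 \<noteq> 0" "D3 \<noteq> 0" "D4 \<noteq> 0" "D5 \<noteq> 0"
  proof -
    show "Q \<noteq> 0" unfolding Q_def by (rule hq)
    show "P \<noteq> 0" unfolding P_def by (rule ha)
    show "D2 \<noteq> 0" unfolding D2_def pw[symmetric] by (rule qpoch_fac_nz[OF ha])
    show "D5 \<noteq> 0" unfolding D5_def t_def by (rule nq)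
    have "c - A*t = c * (1-a*q^2/c*q^n)" unfolding A_def t_def using c0 by (simp add: field_simps power2_eq_square)
    then show "D3 \<noteq> 0" unfolding D3_def using c0 nc by simp
    have "d - A*t = d * (1-a*q^2/d*q^n)" unfolding A_def t_def using d0 by (simp add: field_simps power2_eq_square)
    then show "D4 \<noteq> 0" unfolding D4_def using d0 nd by simp
  qed
  show ?thesis
    unfolding u_t_def H_t_def hT hpow hQ2 hQ3 hP2 hP4 hp1 hK M0_def[symmetric] Tk_def[symmetric]
    by (rule last_abs[OF c0 d0 nz D2_def D3_def D4_def D5_def])
qed

definition B_t :: "complex \<Rightarrow> complex \<Rightarrow> complex \<Rightarrow> complex \<Rightarrow> nat \<Rightarrow> complex" where
  "B_t a c d q n = qpoch (a*q^2/(c*d)) q n / (qpoch (a*q^2/c) q n * qpoch (a*q^2/d) q n * qpoch q q n)"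

lemma lin_solve: "(p0::complex)*x + p1*y = 0 \<Longrightarrow> p1 \<noteq> 0 \<Longrightarrow> y = -p0*x/p1"
  by (simp add: field_simps) (metis add.commute add_eq_0_iff minus_mult_left)

lemma telescope: fixes n :: nat shows "(\<Sum>r\<le>n. f r - (if r = 0 then 0 else f (r - 1))) = (f n :: complex)"
  by (induction n) auto

lemma key:
  fixes a c d q :: complex
  assumes c0: "c \<noteq> 0" and d0: "d \<noteq> 0"
    and hq: "\<And>n. qpoch q q n \<noteq> 0"
    and ha: "\<And>n. qpoch (a*q) q n \<noteq> 0"
    and hc: "\<And>n. qpoch (a*q^2/c) q n \<noteq> 0"
    and hd: "\<And>n. qpoch (a*q^2/d) q n \<noteq> 0"
  shows "(\<Sum>r\<le>n. u_t a c d q n r) = B_t a c d q n"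
proof (induction n)
  case 0
  have "1 - a*q*q^0 \<noteq> 0" by (rule qpoch_fac_nz[OF ha])
  then show ?case by (simp add: u_t_def B_t_def T0 qpoch_def)
next
  case (Suc n)
  let ?S = "\<lambda>n. (\<Sum>r\<le>n. u_t a c d q n r)"
  let ?p0 = "p0_t a c d q n" and ?p1 = "p1_t a c d q n"
  have stp: "?p0 * u_t a c d q n r + ?p1 * u_t a c d q (Suc n) r
     = H_t a c d q n r - (if r = 0 then 0 else H_t a c d q n (r - 1))" if "r \<le> n" for r
  proof (cases r)
    case 0
    then show ?thesis using zero_conc[OF c0 d0 hq ha] by simp
  next
    case (Suc k)
    have "n = (n - Suc k) + Suc k" using that Suc by simp
    from step_conc[OF c0 d0 hq ha hc hd this] show ?thesis using Suc by simp
  qed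
  have "?p0 * ?S n + ?p1 * ?S (Suc n)
      = (\<Sum>r\<le>n. ?p0 * u_t a c d q n r + ?p1 * u_t a c d q (Suc n) r) + ?p1 * u_t a c d q (Suc n) (Suc n)"
    by (simp add: sum_distrib_left sum.distrib algebra_simps)
  also have "\<dots> = (\<Sum>r\<le>n. H_t a c d q n r - (if r = 0 then 0 else H_t a c d q n (r - 1))) - H_t a c d q n n"
    using stp last_conc[OF c0 d0 hq ha hc hd, of n] by simp
  also have "\<dots> = 0" by (simp only: telescope) simp
  finally have rec: "?p0 * ?S n + ?p1 * ?S (Suc n) = 0" .
  have p1nz: "?p1 \<noteq> 0" unfolding p1_t_def
    using qpoch_fac_nz[OF hc, of n] qpoch_fac_nz[OF hd, of n] qpoch_fac_nz[OF hq, of n] by simp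
  have "?S (Suc n) = - ?p0 * ?S n / ?p1" by (rule lin_solve[OF rec p1nz])
  also have "\<dots> = - ?p0 * B_t a c d q n / ?p1" using Suc.IH by simp
  also have "\<dots> = B_t a c d q (Suc n)"
    unfolding B_t_def p0_t_def p1_t_def qpoch_Suc
    by (simp add: divide_simps mult_ac)
  finally show ?case .
qed

lemma shift1: fixes g :: "nat \<Rightarrow> complex"
  shows "(\<Sum>r\<le>n. if r = 0 then 0 else g (r-1)) = (\<Sum>r<n. g r)"
  by (induction n) auto

lemma shift2: fixes g :: "nat \<Rightarrow> complex"
  shows "(\<Sum>r\<le>n. if r < n then g r else 0) = (\<Sum>r<n. g r)"
proof (cases n)
  case 0 then show ?thesis by simp
next
  case (Suc m)
  have "(\<Sum>r\<le>n. if r < n then g r else 0) = (\<Sum>r\<le>m. if r < n then g r else 0)"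
    using Suc by simp
  also have "\<dots> = (\<Sum>r\<le>m. g r)" by (rule sum.cong) (auto simp: Suc)
  also have "\<dots> = (\<Sum>r<n. g r)" using Suc lessThan_Suc_atMost by simp
  finally show ?thesis .
qed

lemma combine:
  fixes f g h :: "nat \<Rightarrow> complex"
  assumes "\<And>r. r \<le> n \<Longrightarrow> f r - (if r < n then g r else 0) = h r"
  shows "(\<Sum>r\<le>n. f r - (if r = 0 then 0 else g (r-1))) = (\<Sum>r\<le>n. h r)"
proof -
  have "(\<Sum>r\<le>n. f r - (if r = 0 then 0 else g (r-1))) = (\<Sum>r\<le>n. f r) - (\<Sum>r\<le>n. if r = 0 then 0 else g (r-1))"
    by (simp add: sum_subtractf)
  also have "\<dots> = (\<Sum>r\<le>n. f r) - (\<Sum>r\<le>n. if r < n then g r else 0)"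
    unfolding shift1 shift2 ..
  also have "\<dots> = (\<Sum>r\<le>n. f r - (if r < n then g r else 0))"
    by (simp add: sum_subtractf)
  also have "\<dots> = (\<Sum>r\<le>n. h r)" by (rule sum.cong) (auto simp: assms)
  finally show ?thesis .
qed

lemma tw_abs:
  fixes T Qj P E1 E2 X Y Z :: complex
  assumes "Qj \<noteq> 0" "P \<noteq> 0" "E1 \<noteq> 0" "E2 \<noteq> 0" and rel: "Y*E2 - W*E1 = Z*(1 - X)"
  shows "Y*T/(Qj*E1*P) - W*T/(Qj*(P*E2)) = Z*(T*(1-X)/(Qj*E1*(P*E2)))"
proof -
  have "Z*(T*(1-X)/(Qj*E1*(P*E2))) = T*(Y*E2 - W*E1)/(Qj*E1*(P*E2))" unfolding rel by simp
  then show ?thesis using assms(1-4) by (simp add: field_simps)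
qed

lemma tw_abs2:
  fixes T Q P X Z :: complex
  assumes "Q \<noteq> 0" "P \<noteq> 0" "1 - X \<noteq> 0"
  shows "Z*T/(Q*P) = Z*(T*(1-X)/(Q*(P*(1-X))))"
  using assms by (simp add: field_simps)

lemma termwise:
  fixes a c d q :: complex and Y W Z :: "nat \<Rightarrow> complex"
  assumes hq: "\<And>n. qpoch q q n \<noteq> 0"
    and ha: "\<And>n. qpoch (a*q) q n \<noteq> 0"
    and rel: "\<And>r j. n = r + Suc j \<Longrightarrow> Y r * (1 - a*q*q^(n+r)) - W r * (1 - q*q^j) = Z n * (1 - a*q^(2*r+1))"
    and rn: "r \<le> n" and YZ: "Y n = Z n"
  shows "Y r * T_term a c d q r / (qpoch q q (n-r) * qpoch (a*q) q (n+r))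
       - (if r < n then W r * T_term a c d q r / (qpoch q q (n - Suc r) * qpoch (a*q) q (n + Suc r)) else 0)
     = Z n * u_t a c d q n r"
proof (cases "r < n")
  case True
  define j where "j = n - Suc r"
  have nj: "n = r + Suc j" using True unfolding j_def by simp
  have e1: "qpoch q q (n-r) = qpoch q q j * (1 - q*q^j)" using nj by (simp add: qpoch_Suc)
  have e2: "qpoch q q (n - Suc r) = qpoch q q j" using nj by simp
  have e3: "qpoch (a*q) q (n + Suc r) = qpoch (a*q) q (n+r) * (1 - a*q*q^(n+r))"
    by (simp add: qpoch_Suc)
  have e4: "qpoch (a*q) q (n+r+1) = qpoch (a*q) q (n+r) * (1 - a*q*q^(n+r))"
    by (simp add: qpoch_Suc)
  show ?thesis using True unfolding u_t_def e1 e2 e3 e4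
    by (simp only: if_True) (rule tw_abs[OF hq ha qpoch_fac_nz[OF hq] qpoch_fac_nz[OF ha] rel[OF nj]])
next
  case False
  then have rn': "r = n" using rn by simp
  have x: "1 - a*q*q^(n+n) = 1 - a*q^(2*n+1)" by (simp add: power_add mult_2 power_mult power2_eq_square algebra_simps)
  have e4: "qpoch (a*q) q (n+n+1) = qpoch (a*q) q (n+n) * (1 - a*q^(2*n+1))"
    unfolding x[symmetric] by (simp add: qpoch_Suc)
  have nz: "1 - a*q^(2*n+1) \<noteq> 0" unfolding x[symmetric] by (rule qpoch_fac_nz[OF ha])
  show ?thesis unfolding rn' u_t_def e4 YZ
    by (simp only: less_irrefl if_False diff_zero) (rule tw_abs2[OF hq ha nz])
qed


lemma relS_lem: fixes a q :: complex assumes "n = r + Suc j"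
  shows "1 * (1 - a*q*q^(n+r)) - a*q^(2*r+1) * (1 - q*q^j) = 1 * (1 - a*q^(2*r+1))"
proof -
  have e: "q*q^(n+r) = q^(2*r+1)*(q*q^j)"
    using power_add[of q r r] unfolding assms by (simp add: power_add mult_2 mult_2_right mult_ac)
  have "a*q*q^(n+r) = a*q^(2*r+1)*(q*q^j)" by (metis e mult.assoc)
  then show ?thesis by (simp only:) (simp add: algebra_simps)
qed
lemma relD_lem: fixes a q :: complex assumes "n = r + Suc j"
  shows "q^r * (1 - a*q*q^(n+r)) - q^r * (1 - q*q^j) = q^n * (1 - a*q^(2*r+1))"
proof -
  have e: "q^r*(q*q^(n+r)) = q^n*q^(2*r+1)"
    using power_add[of q r r] unfolding assms by (simp add: power_add mult_2 mult_2_right mult_ac)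
  have e2: "q^r*(q*q^j) = q^n" unfolding assms by (simp add: power_add mult_ac)
  have "q^r * (1 - a*q*q^(n+r)) - q^r * (1 - q*q^j) = q^r*(q*q^j) - a*(q^r*(q*q^(n+r)))"
    by (simp add: algebra_simps)
  also have "\<dots> = q^n * (1 - a*q^(2*r+1))" unfolding e e2 by (simp add: algebra_simps)
  finally show ?thesis .
qed

theorem mainTheorem5:
  fixes a c d q :: complex
  assumes "c \<noteq> 0" and "d \<noteq> 0"
    and "\<And>n. qpoch q q n \<noteq> 0"
    and "\<And>n. qpoch (a*q) q n \<noteq> 0"
    and "\<And>n. qpoch (a*q^2/c) q n \<noteq> 0"
    and "\<And>n. qpoch (a*q^2/d) q n \<noteq> 0"
  shows "bailey_pair a q (alpha_star a c d q) (beta_star a c d q)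
       \<and> bailey_pair a q (alpha_dagger a c d q) (beta_dagger a c d q)"
proof -
  note hq = assms(3) and ha = assms(4)
  have K: "\<And>n. (\<Sum>r\<le>n. u_t a c d q n r) = B_t a c d q n" by (rule key[OF assms])
  have relS: "1 * (1 - a*q*q^(n+r)) - a*q^(2*r+1) * (1 - q*q^j) = 1 * (1 - a*q^(2*r+1))"
    if "n = r + Suc j" for n r j
    using relS_lem[OF that] .
  have relD: "q^r * (1 - a*q*q^(n+r)) - q^r * (1 - q*q^j) = q^n * (1 - a*q^(2*r+1))"
    if "n = r + Suc j" for n r j
    using relD_lem[OF that] .
  have star: "beta_star a c d q n = (\<Sum>r\<le>n. alpha_star a c d q r / (qpoch q q (n - r) * qpoch (a*q) q (n + r)))" for n
  proof -
    define f where "f = (\<lambda>r. 1 * T_term a c d q r / (qpoch q q (n - r) * qpoch (a*q) q (n + r)))"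
    define g where "g = (\<lambda>r. a*q^(2*r+1) * T_term a c d q r / (qpoch q q (n - Suc r) * qpoch (a*q) q (n + Suc r)))"
    define h where "h = (\<lambda>r. 1 * u_t a c d q n r)"
    have "(\<Sum>r\<le>n. alpha_star a c d q r / (qpoch q q (n - r) * qpoch (a*q) q (n + r)))
        = (\<Sum>r\<le>n. f r - (if r = 0 then 0 else g (r-1)))"
    proof (rule sum.cong[OF refl])
      fix r assume "r \<in> {..n}"
      show "alpha_star a c d q r / (qpoch q q (n - r) * qpoch (a*q) q (n + r)) = f r - (if r = 0 then 0 else g (r-1))"
        unfolding f_def g_def by (cases r) (simp_all add: alpha_star_def T0 diff_divide_distrib)
    qed
    also have "\<dots> = (\<Sum>r\<le>n. h r)"
    proof (rule combine)
      fix r assume "r \<le> n"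
      show "f r - (if r < n then g r else 0) = h r"
        unfolding f_def g_def h_def
        by (rule termwise[where Y="\<lambda>_. 1" and W="\<lambda>r. a*q^(2*r+1)" and Z="\<lambda>_. 1", OF hq ha relS \<open>r \<le> n\<close> refl])
    qed
    also have "\<dots> = B_t a c d q n" unfolding h_def using K by simp
    finally show ?thesis by (simp add: beta_star_def B_t_def)
  qed
  have dag: "beta_dagger a c d q n = (\<Sum>r\<le>n. alpha_dagger a c d q r / (qpoch q q (n - r) * qpoch (a*q) q (n + r)))" for n
  proof -
    define f where "f = (\<lambda>r. q^r * T_term a c d q r / (qpoch q q (n - r) * qpoch (a*q) q (n + r)))"
    define g where "g = (\<lambda>r. q^r * T_term a c d q r / (qpoch q q (n - Suc r) * qpoch (a*q) q (n + Suc r)))"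
    define h where "h = (\<lambda>r. q^n * u_t a c d q n r)"
    have "(\<Sum>r\<le>n. alpha_dagger a c d q r / (qpoch q q (n - r) * qpoch (a*q) q (n + r)))
        = (\<Sum>r\<le>n. f r - (if r = 0 then 0 else g (r-1)))"
    proof (rule sum.cong[OF refl])
      fix r assume "r \<in> {..n}"
      show "alpha_dagger a c d q r / (qpoch q q (n - r) * qpoch (a*q) q (n + r)) = f r - (if r = 0 then 0 else g (r-1))"
        unfolding f_def g_def by (cases r) (simp_all add: alpha_dagger_def T0 diff_divide_distrib)
    qed
    also have "\<dots> = (\<Sum>r\<le>n. h r)"
    proof (rule combine)
      fix r assume "r \<le> n"
      show "f r - (if r < n then g r else 0) = h r"
        unfolding f_def g_def h_def
        by (rule termwise[where Y="\<lambda>r. q^r" and W="\<lambda>r. q^r" and Z="\<lambda>n. q^n", OF hq ha relD \<open>r \<le> n\<close> refl])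
    qed
    also have "\<dots> = q^n * B_t a c d q n" unfolding h_def using K by (simp add: sum_distrib_left[symmetric])
    finally show ?thesis by (simp add: beta_dagger_def B_t_def)
  qed
  show ?thesis unfolding bailey_pair_def using star dag
    by (simp add: alpha_star_def alpha_dagger_def)
qed

end
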